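(* Let $J$ be a $\times d$-invariant set. For $x\in\mathbb{R}$ let $J_x=\{t-x:t\in J\}$. If $x\in\mathbb{R}$ is such that $\mathbb{Q}\cap J_x\neq\emptyset$, then $\mathbb{Q}\cap J_x$ is dense in $J_x$, and there exists $K<\infty$ such that every point $y\in J_x$ is intrinsically approximable (relative to $J_x$) with respect to the constant function $\psi(q)=K$.
   Context: Fix an integer $d\ge2$ and $E\subseteq\{0,\dots,d-1\}$ with $1<\#E<d$. The $\times d$-invariant set is $J=\{x\in[0,1]: x=\sum_{i\ge1}a_id^{-i}\text{ with all }a_i\in E\}$. For $S\subseteq\mathbb{R}$ and $\psi:\mathbb{N}\to(0,\infty)$, a point $y\in S$ is intrinsically approximable with respect to $\psi$ if there are infinitely many rationals $p/q\in\mathbb{Q}\cap S$ (lowest terms, $q\ge1$) with $|y-p/q|\le\psi(q)/q$. *)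

theory Defs
  imports "HOL-Analysis.Analysis"
begin

text \<open>The times-d invariant set: reals in [0,1] with a base-d expansion using only digits from E
  (digits indexed from 0 here, corresponding to a_{i+1} d^{-(i+1)}).\<close>
definition digit_set :: "nat \<Rightarrow> nat set \<Rightarrow> real set" where
  "digit_set d E = {x. \<exists>a::nat \<Rightarrow> nat. (\<forall>i. a i \<in> E) \<and>
                        x = (\<Sum>i. real (a i) / real d ^ (i + 1))}"

definition shift_set :: "real set \<Rightarrow> real \<Rightarrow> real set" where
  "shift_set J x = {t - x | t. t \<in> J}"

definition intrinsically_approximable :: "real set \<Rightarrow> (nat \<Rightarrow> real) \<Rightarrow> real \<Rightarrow> bool" where
  "intrinsically_approximable S psi y \<longleftrightarrow> y \<in> S \<and>
     infinite {(p::int, q::nat). q \<ge> 1 \<and> coprime p (int q) \<and>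
                 real_of_int p / real q \<in> S \<and>
                 \<bar>y - real_of_int p / real q\<bar> \<le> psi q / real q}"

end

theory Submission
  imports Defs
begin

definition ds :: "nat \<Rightarrow> (nat \<Rightarrow> nat) \<Rightarrow> real" where
  "ds d a = (\<Sum>i. real (a i) / real d ^ (i + 1))"

lemma ds_summable:
  assumes "d \<ge> 2" "\<forall>i. a i < d"
  shows "summable (\<lambda>i. real (a i) / real d ^ (i + 1))"
proof (rule summable_comparison_test')
  show "summable (\<lambda>i. (1 / real d) ^ i)" using assms(1) by (intro summable_geometric) auto
  fix i
  have "real (a i) \<le> real d" using assms(2) less_imp_le of_nat_le_iff by blast
  hence "real (a i) / real d ^ (i + 1) \<le> real d / real d ^ (i+1)"
    using assms(1) by (intro divide_right_mono) auto
  also have "\<dots> = (1 / real d) ^ i" using assms(1) by (simp add: power_divide field_simps)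
  finally show "norm (real (a i) / real d ^ (i + 1)) \<le> (1 / real d) ^ i" by simp
qed

lemma ds_diff_finite:
  assumes "d \<ge> 2" "\<forall>i. a i < d" "\<forall>i. b i < d" "\<forall>i\<ge>N. b i = a i"
  shows "ds d b - ds d a = (\<Sum>i<N. (real (b i) - real (a i)) / real d ^ (i + 1))"
proof -
  have "ds d b - ds d a = (\<Sum>i. real (b i) / real d ^ (i + 1) - real (a i) / real d ^ (i + 1))"
    unfolding ds_def using ds_summable[OF assms(1) assms(2)] ds_summable[OF assms(1) assms(3)]
    by (simp add: suminf_diff)
  also have "\<dots> = (\<Sum>i<N. real (b i) / real d ^ (i + 1) - real (a i) / real d ^ (i + 1))"
    by (rule suminf_finite) (use assms(4) in auto)
  finally show ?thesis by (simp add: diff_divide_distrib)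
qed

lemma ds_close:
  assumes "d \<ge> 2" "\<forall>i. b i < d" "\<forall>i. c i < d" "\<forall>i<n. b i = c i"
  shows "\<bar>ds d b - ds d c\<bar> \<le> 2 / real d ^ n"
proof -
  define f where "f i = (real (b i) - real (c i)) / real d ^ (i + 1)" for i
  have sb: "summable (\<lambda>i. real (b i) / real d ^ (i + 1))" using ds_summable assms by blast
  have sc: "summable (\<lambda>i. real (c i) / real d ^ (i + 1))" using ds_summable assms by blast
  have sf: "summable f" unfolding f_def diff_divide_distrib using summable_diff[OF sb sc] .
  have "ds d b - ds d c = suminf f"
    unfolding ds_def f_def diff_divide_distrib using suminf_diff[OF sb sc] by simp
  also have "\<dots> = (\<Sum>i. f (i + n)) + (\<Sum>i<n. f i)" using suminf_split_initial_segment[OF sf] .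
  also have "(\<Sum>i<n. f i) = 0" using assms(4) by (simp add: f_def)
  finally have eq: "ds d b - ds d c = (\<Sum>i. f (i + n))" by simp
  define g where "g i = (1 / real d) ^ n * (1 / real d) ^ i" for i
  have gs: "g sums ((1 / real d) ^ n * (1 / (1 - 1 / real d)))"
    unfolding g_def using assms(1) by (intro sums_mult geometric_sums) auto
  have sfn: "summable (\<lambda>i. f (i + n))" using sf by (simp add: summable_iff_shift)
  have bnd: "\<bar>f (i + n)\<bar> \<le> g i" for i
  proof -
    have "\<bar>real (b (i+n)) - real (c (i+n))\<bar> \<le> real d"
      using assms(2,3)[rule_format, of "i+n"] by auto
    hence "\<bar>f (i + n)\<bar> \<le> real d / real d ^ (i + n + 1)"
      unfolding f_def abs_divide power_abs abs_of_nat using assms(1) by (intro divide_right_mono) auto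
    also have "\<dots> = g i" unfolding g_def using assms(1)
      by (simp add: power_divide power_add field_simps)
    finally show ?thesis .
  qed
  have "(\<Sum>i. f (i + n)) \<le> suminf g"
    using bnd sfn gs by (intro suminf_le) (auto simp: sums_summable abs_le_iff)
  moreover have "- suminf g \<le> (\<Sum>i. f (i + n))"
  proof -
    have bnd2: "- g i \<le> f (i + n)" for i using bnd[of i] by linarith
    have "(\<Sum>i. - g i) \<le> (\<Sum>i. f (i + n))"
      using bnd2 sfn gs by (intro suminf_le) (auto simp: sums_summable abs_le_iff summable_minus)
    thus ?thesis using gs by (simp add: suminf_minus sums_summable)
  qed
  moreover have "suminf g \<le> 2 / real d ^ n"
  proof -
    have "suminf g = (1 / real d) ^ n * (1 / (1 - 1 / real d))" using gs sums_unique by metis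
    also have "1 / (1 - 1 / real d) \<le> 2" using assms(1) by (simp add: field_simps)
    hence "(1 / real d) ^ n * (1 / (1 - 1 / real d)) \<le> (1 / real d) ^ n * 2"
      by (intro mult_left_mono) auto
    finally show ?thesis by (simp add: power_divide)
  qed
  ultimately show ?thesis using eq by linarith
qed

lemma finite_sum_int:
  "\<exists>k::int. (\<Sum>i<N. real_of_int (z i) / real d ^ (i + 1)) = real_of_int k / real d ^ N"
proof (induction N)
  case 0
  then show ?case by (intro exI[of _ 0]) simp
next
  case (Suc N)
  then obtain k where k: "(\<Sum>i<N. real_of_int (z i) / real d ^ (i + 1)) = real_of_int k / real d ^ N" by blast
  show ?case
  proof (cases "d = 0")
    case True
    then show ?thesis by (intro exI[of _ 0]) simp
  next
    case False
    show ?thesis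
      by (intro exI[of _ "k * int d + z N"]) (use False k in \<open>simp add: field_simps\<close>)
  qed
qed

lemma reduce_frac:
  fixes m :: int and M :: nat
  assumes "M > 0"
  shows "\<exists>p q. q \<ge> 1 \<and> q \<le> M \<and> coprime p (int q) \<and> real_of_int m / real M = real_of_int p / real q"
proof -
  define g where "g = gcd m (int M)"
  have gpos: "g > 0" unfolding g_def using assms by simp
  have gm: "g dvd m" and gM: "g dvd int M" unfolding g_def by auto
  define p where "p = m div g"
  define q where "q = nat (int M div g)"
  have cop: "coprime p (int M div g)" unfolding p_def g_def
    by (rule div_gcd_coprime) (use assms in auto)
  have Mq: "int M = int q * g" unfolding q_def using gM gpos
    by (smt (verit, best) dvd_div_mult_self int_nat_eq mult_nonneg_nonneg of_nat_0_le_iff pos_imp_zdiv_nonneg_iff)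
  have mp: "m = p * g" unfolding p_def using gm by simp
  have q1: "q \<ge> 1" using Mq assms gpos by (cases "q = 0") auto
  have "int q * 1 \<le> int q * g" by (rule mult_left_mono) (use gpos in auto)
  hence qM: "q \<le> M" using Mq by simp
  have cop2: "coprime p (int q)" using cop q_def
    by (metis Mq gpos int_nat_eq mult_cancel_right nonzero_mult_div_cancel_right order_less_irrefl)
  have "real_of_int m / real M = real_of_int p / real q"
  proof -
    have "real M = real q * real_of_int g" using Mq by (metis of_int_mult of_int_of_nat_eq)
    moreover have "real_of_int m = real_of_int p * real_of_int g" using mp by simp
    ultimately show ?thesis using gpos by simp
  qed
  thus ?thesis using q1 qM cop2 by blast
qed


lemma digit_set_ds: "digit_set d E = {z. \<exists>a. (\<forall>i. a i \<in> E) \<and> z = ds d a}"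
  unfolding digit_set_def ds_def by simp

lemma key:
  assumes d2: "d \<ge> 2" and Es: "E \<subseteq> {0..<d}" and e12: "e1 \<in> E" "e2 \<in> E" "e1 \<noteq> e2"
    and aE: "\<forall>i. a i \<in> E" and v: "v > 0" and u: "ds d a - x = real_of_int u / real v"
    and y: "y \<in> shift_set (digit_set d E) x"
  shows "\<exists>w m. w \<in> shift_set (digit_set d E) x \<and> w \<noteq> y \<and>
           w = real_of_int m / real (v * d ^ (n + 1)) \<and> \<bar>y - w\<bar> \<le> 2 / real d ^ n"
proof -
  obtain s where s: "s \<in> digit_set d E" "y = s - x" using y unfolding shift_set_def by blast
  obtain c where c: "\<forall>i. c i \<in> E" "s = ds d c" using s(1) unfolding digit_set_ds by blast
  have lt: "f < d" if "f \<in> E" for f using that Es by auto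
  define b where "b e i = (if i < n then c i else if i = n then e else a i)" for e i
  have bE: "\<forall>i. b e i \<in> E" if "e \<in> E" for e using that c aE by (auto simp: b_def)
  have blt: "\<forall>i. b e i < d" if "e \<in> E" for e using bE[OF that] lt by blast
  have alt: "\<forall>i. a i < d" using aE lt by blast
  have clt: "\<forall>i. c i < d" using c lt by blast
  have "ds d (b e1) - ds d (b e2) = (\<Sum>i<Suc n. (real (b e1 i) - real (b e2 i)) / real d ^ (i + 1))"
    by (rule ds_diff_finite) (use d2 blt e12 in \<open>auto simp: b_def\<close>)
  also have "\<dots> = (\<Sum>i<n. (real (b e1 i) - real (b e2 i)) / real d ^ (i + 1))
      + (real e1 - real e2) / real d ^ (n + 1)" by (simp add: b_def)
  also have "(\<Sum>i<n. (real (b e1 i) - real (b e2 i)) / real d ^ (i + 1)) = 0"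
    by (simp add: b_def)
  finally have "ds d (b e1) - ds d (b e2) = (real e1 - real e2) / real d ^ (n + 1)" by simp
  moreover have "(real e1 - real e2) / real d ^ (n + 1) \<noteq> 0" using e12 d2 by auto
  ultimately have ne: "ds d (b e1) \<noteq> ds d (b e2)" by auto
  obtain e where e: "e \<in> E" "ds d (b e) \<noteq> s" using ne e12 by metis
  have close: "\<bar>ds d (b e) - ds d c\<bar> \<le> 2 / real d ^ n"
    by (rule ds_close) (use d2 blt[OF e(1)] clt in \<open>auto simp: b_def\<close>)
  have fin: "ds d (b e) - ds d a = (\<Sum>i<Suc n. (real (b e i) - real (a i)) / real d ^ (i + 1))"
    by (rule ds_diff_finite) (use d2 blt[OF e(1)] alt in \<open>auto simp: b_def\<close>)
  obtain k where k: "(\<Sum>i<Suc n. real_of_int (int (b e i) - int (a i)) / real d ^ (i + 1))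
      = real_of_int k / real d ^ Suc n"
    using finite_sum_int[where N="Suc n" and z="\<lambda>i. int (b e i) - int (a i)" and d=d] by blast
  have k2: "ds d (b e) - ds d a = real_of_int k / real d ^ (n + 1)" using fin k by simp
  define w where "w = ds d (b e) - x"
  define m where "m = k * int v + u * int d ^ (n + 1)"
  have "w = (ds d (b e) - ds d a) + (ds d a - x)" unfolding w_def by simp
  also have "\<dots> = real_of_int k / real d ^ (n + 1) + real_of_int u / real v" using k2 u by simp
  also have "\<dots> = real_of_int m / real (v * d ^ (n + 1))"
    unfolding m_def using v d2 by (simp add: field_simps)
  finally have wm: "w = real_of_int m / real (v * d ^ (n + 1))" .
  have wS: "w \<in> shift_set (digit_set d E) x"
    unfolding shift_set_def digit_set_ds w_def using bE[OF e(1)] by blast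
  have "w \<noteq> y" using e(2) s(2) unfolding w_def by simp
  moreover have "\<bar>y - w\<bar> \<le> 2 / real d ^ n" using close s(2) c(2) unfolding w_def by simp
  ultimately show ?thesis using wS wm by blast
qed

theorem lemma3p4:
  fixes d :: nat and E :: "nat set" and x :: real
  assumes "d \<ge> 2"
    and "E \<subseteq> {0..<d}"
    and "1 < card E" and "card E < d"
    and "\<rat> \<inter> shift_set (digit_set d E) x \<noteq> {}"
  shows "shift_set (digit_set d E) x \<subseteq> closure (\<rat> \<inter> shift_set (digit_set d E) x)
    \<and> (\<exists>K::real. K > 0 \<and> (\<forall>y \<in> shift_set (digit_set d E) x.
          intrinsically_approximable (shift_set (digit_set d E) x) (\<lambda>q. K) y))"
proof -
  define S where "S = shift_set (digit_set d E) x"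
  obtain z where z: "z \<in> \<rat>" "z \<in> S" using assms(5) unfolding S_def by blast
  obtain t0 where t0: "t0 \<in> digit_set d E" "z = t0 - x" using z(2) unfolding S_def shift_set_def by blast
  obtain a where a: "\<forall>i. a i \<in> E" "t0 = ds d a" using t0(1) unfolding digit_set_ds by blast
  obtain u v0 where uv: "v0 > 0" "z = of_int u / of_int v0" using z(1) Rats_cases' by metis
  define v where "v = nat v0"
  have v: "v > 0" using uv unfolding v_def by simp
  have u: "ds d a - x = real_of_int u / real v" using uv t0 a unfolding v_def by simp
  have finE: "finite E" using assms(2) finite_subset by blast
  obtain e1 e2 where e12: "e1 \<in> E" "e2 \<in> E" "e1 \<noteq> e2"
    using assms(3) finE card_le_Suc0_iff_eq[OF finE] by (metis One_nat_def not_le)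
  define K where "K = 2 * real d * real v"
  have Kpos: "K > 0" unfolding K_def using v assms(1) by simp
  have pts: "\<exists>w. w \<in> \<rat> \<and> w \<in> S \<and> w \<noteq> y \<and> \<bar>y - w\<bar> \<le> 2 / real d ^ n \<and>
      (\<exists>p q. q \<ge> 1 \<and> coprime p (int q) \<and> w = real_of_int p / real q \<and> \<bar>y - w\<bar> \<le> K / real q)"
    if y: "y \<in> S" for y n
  proof -
    obtain w m where wm: "w \<in> S" "w \<noteq> y" "w = real_of_int m / real (v * d ^ (n + 1))"
        "\<bar>y - w\<bar> \<le> 2 / real d ^ n"
      using key[OF assms(1,2) e12 a(1) v u y[unfolded S_def], of n] unfolding S_def by blast
    have Mpos: "v * d ^ (n + 1) > 0" using v assms(1) by simp
    obtain p q where pq: "q \<ge> 1" "q \<le> v * d ^ (n + 1)" "coprime p (int q)"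
        "real_of_int m / real (v * d ^ (n + 1)) = real_of_int p / real q"
      using reduce_frac[OF Mpos] by blast
    have "2 / real d ^ n = K / real (v * d ^ (n + 1))"
      unfolding K_def using v assms(1) by (simp add: field_simps)
    also have "\<dots> \<le> K / real q"
    proof -
      have q_le: "real q \<le> real (v * d ^ (n + 1))" using pq(2) by (simp only: of_nat_le_iff)
      have prodpos: "0 < real (v * d ^ (n + 1)) * real q" using Mpos pq(1) by simp
      show ?thesis using divide_left_mono[OF q_le _ prodpos] Kpos by simp
    qed
    finally have "\<bar>y - w\<bar> \<le> K / real q" using wm(4) by linarith
    moreover have "w \<in> \<rat>" using wm(3) by simp
    ultimately show ?thesis using wm pq by metis
  qed
  have small: "\<exists>n. 2 / real d ^ n < \<delta>" if "\<delta> > 0" for \<delta>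
  proof -
    have "\<delta> / 2 > 0" using that by simp
    moreover have "1 / real d < 1" using assms(1) by simp
    ultimately obtain n where "(1 / real d) ^ n < \<delta> / 2"
      using real_arch_pow_inv by blast
    thus ?thesis by (intro exI[of _ n]) (simp add: power_divide)
  qed
  have cl: "S \<subseteq> closure (\<rat> \<inter> S)"
  proof
    fix y assume y: "y \<in> S"
    show "y \<in> closure (\<rat> \<inter> S)"
      unfolding closure_approachable
    proof (intro allI impI)
      fix \<epsilon> :: real assume "\<epsilon> > 0"
      then obtain n where n: "2 / real d ^ n < \<epsilon>" using small by blast
      obtain w where w: "w \<in> \<rat>" "w \<in> S" "\<bar>y - w\<bar> \<le> 2 / real d ^ n" using pts[OF y, of n] by blast
      show "\<exists>w\<in>\<rat> \<inter> S. dist w y < \<epsilon>"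
        using w n by (intro bexI[of _ w]) (auto simp: dist_real_def)
    qed
  qed
  have ap: "intrinsically_approximable S (\<lambda>q. K) y" if y: "y \<in> S" for y
  proof -
    define P where "P = {(p::int, q::nat). q \<ge> 1 \<and> coprime p (int q) \<and>
                 real_of_int p / real q \<in> S \<and> \<bar>y - real_of_int p / real q\<bar> \<le> K / real q}"
    have inP: "\<exists>pq \<in> P. (\<lambda>(p,q). real_of_int p / real q) pq \<noteq> y \<and>
        (\<lambda>(p,q). \<bar>y - real_of_int p / real q\<bar>) pq \<le> 2 / real d ^ n" for n
    proof -
      obtain w p q where w: "w \<in> S" "w \<noteq> y" "\<bar>y - w\<bar> \<le> 2 / real d ^ n" "q \<ge> 1"
        "coprime p (int q)" "w = real_of_int p / real q" "\<bar>y - w\<bar> \<le> K / real q"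
        using pts[OF y, of n] by blast
      show ?thesis using w by (intro bexI[of _ "(p, q)"]) (auto simp: P_def)
    qed
    have "infinite P"
    proof
      assume fP: "finite P"
      define D where "D = (\<lambda>(p,q). \<bar>y - real_of_int p / real q\<bar>) `
          (P \<inter> {(p,q). real_of_int p / real q \<noteq> y})"
      have fD: "finite D" unfolding D_def by (intro finite_imageI finite_Int) (use fP in simp)
      obtain pq0 where pq0: "pq0 \<in> P" "(\<lambda>(p,q). real_of_int p / real q) pq0 \<noteq> y"
        using inP[of 0] by blast
      have "(\<lambda>(p,q). \<bar>y - real_of_int p / real q\<bar>) pq0 \<in> D"
        unfolding D_def by (rule imageI) (use pq0 in \<open>cases pq0; auto\<close>)
      hence Dne: "D \<noteq> {}" by blast
      have Dpos: "\<forall>t\<in>D. t > 0" unfolding D_def by (simp add: case_prod_beta)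
      define \<delta> where "\<delta> = Min D"
      have dpos: "\<delta> > 0" unfolding \<delta>_def using fD Dne Dpos by simp
      obtain n where n: "2 / real d ^ n < \<delta>" using small[OF dpos] by blast
      obtain pq where pq: "pq \<in> P" "(\<lambda>(p,q). real_of_int p / real q) pq \<noteq> y"
        "(\<lambda>(p,q). \<bar>y - real_of_int p / real q\<bar>) pq \<le> 2 / real d ^ n" using inP[of n] by blast
      have "(\<lambda>(p,q). \<bar>y - real_of_int p / real q\<bar>) pq \<in> D"
        unfolding D_def by (rule imageI) (use pq(1,2) in \<open>cases pq; auto\<close>)
      hence "\<delta> \<le> (\<lambda>(p,q). \<bar>y - real_of_int p / real q\<bar>) pq" unfolding \<delta>_def using fD by (rule Min_le[rotated])
      thus False using pq(3) n by linarith
    qed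
    thus ?thesis unfolding intrinsically_approximable_def P_def using y by simp
  qed
  show ?thesis using cl ap Kpos unfolding S_def by blast
qed

end
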